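(* Let $(X,\mathcal{E})$ be a ballean and $Y\subseteq X$ an unbounded subset. If $(X,\mathcal{E})$ is maximal (respectively, extremely normal, ultranormal), then the subballean $(Y,\mathcal{E}_Y)$ is maximal (respectively, extremely normal, ultranormal).
   Context: A ballean $(X,\mathcal{E})$ is a set with a coarse structure. $E[x]=\{y:(x,y)\in E\}$, $E[A]=\bigcup_{a\in A}E[a]$. $Y$ is bounded if $Y\subseteq E[x]$ for some $x$ and $E\in\mathcal{E}$. The subballean on $Y$ has coarse structure $\mathcal{E}_Y=\{E\cap(Y\times Y):E\in\mathcal{E}\}$. $A$ is large if $X=E[A]$ for some $E$. Subsets $A,B$ are asymptotically disjoint if $E[A]\cap E[B]$ is bounded for every $E$. An unbounded ballean is maximal if $X$ is bounded in every coarse structure strictly containing $\mathcal{E}$; extremely normal if every unbounded subset is large; ultranormal if no two unbounded subsets are asymptotically disjoint. *)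

theory Defs
  imports Main
begin

text \<open>Coarse structure in the sense of Protasov: a family of entourages on X, each
containing the diagonal, closed under composition, inversion and taking subsets that
still contain the diagonal; balleans are assumed connected (the entourages cover X x X).\<close>
definition coarse_structure :: "'a set \<Rightarrow> ('a \<times> 'a) set set \<Rightarrow> bool" where
  "coarse_structure X \<E> \<longleftrightarrow>
     \<E> \<noteq> {} \<and>
     (\<forall>E\<in>\<E>. Id_on X \<subseteq> E \<and> E \<subseteq> X \<times> X) \<and>
     (\<forall>E\<in>\<E>. \<forall>F\<in>\<E>. E O F \<in> \<E>) \<and>
     (\<forall>E\<in>\<E>. E\<inverse> \<in> \<E>) \<and>
     (\<forall>E\<in>\<E>. \<forall>F. Id_on X \<subseteq> F \<and> F \<subseteq> E \<longrightarrow> F \<in> \<E>) \<and>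
     \<Union>\<E> = X \<times> X"

definition bounded_in :: "('a \<times> 'a) set set \<Rightarrow> 'a set \<Rightarrow> bool" where
  "bounded_in \<E> Y \<longleftrightarrow> (\<exists>x. \<exists>E\<in>\<E>. Y \<subseteq> E `` {x})"

definition large_in :: "'a set \<Rightarrow> ('a \<times> 'a) set set \<Rightarrow> 'a set \<Rightarrow> bool" where
  "large_in X \<E> A \<longleftrightarrow> (\<exists>E\<in>\<E>. X = E `` A)"

definition asymp_disjoint :: "('a \<times> 'a) set set \<Rightarrow> 'a set \<Rightarrow> 'a set \<Rightarrow> bool" where
  "asymp_disjoint \<E> A B \<longleftrightarrow> (\<forall>E\<in>\<E>. bounded_in \<E> (E `` A \<inter> E `` B))"

definition subballean :: "('a \<times> 'a) set set \<Rightarrow> 'a set \<Rightarrow> ('a \<times> 'a) set set" where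
  "subballean \<E> Y = (\<lambda>E. E \<inter> (Y \<times> Y)) ` \<E>"

definition maximal_ballean :: "'a set \<Rightarrow> ('a \<times> 'a) set set \<Rightarrow> bool" where
  "maximal_ballean X \<E> \<longleftrightarrow>
     \<not> bounded_in \<E> X \<and>
     (\<forall>\<E>'. coarse_structure X \<E>' \<and> \<E> \<subset> \<E>' \<longrightarrow> bounded_in \<E>' X)"

definition extremely_normal :: "'a set \<Rightarrow> ('a \<times> 'a) set set \<Rightarrow> bool" where
  "extremely_normal X \<E> \<longleftrightarrow>
     (\<forall>A. A \<subseteq> X \<and> \<not> bounded_in \<E> A \<longrightarrow> large_in X \<E> A)"

definition ultranormal :: "'a set \<Rightarrow> ('a \<times> 'a) set set \<Rightarrow> bool" where
  "ultranormal X \<E> \<longleftrightarrow>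
     (\<forall>A B. A \<subseteq> X \<and> B \<subseteq> X \<and> \<not> bounded_in \<E> A \<and> \<not> bounded_in \<E> B
        \<longrightarrow> \<not> asymp_disjoint \<E> A B)"

end

theory Submission
  imports Defs
begin

lemma cs_facts:
  assumes "coarse_structure X \<E>"
  shows "\<E> \<noteq> {}" "\<And>E. E\<in>\<E> \<Longrightarrow> Id_on X \<subseteq> E" "\<And>E. E\<in>\<E> \<Longrightarrow> E \<subseteq> X \<times> X"
    "\<And>E F. E\<in>\<E> \<Longrightarrow> F\<in>\<E> \<Longrightarrow> E O F \<in> \<E>" "\<And>E. E\<in>\<E> \<Longrightarrow> E\<inverse> \<in> \<E>"
    "\<And>E F. E\<in>\<E> \<Longrightarrow> Id_on X \<subseteq> F \<Longrightarrow> F \<subseteq> E \<Longrightarrow> F \<in> \<E>" "\<Union>\<E> = X \<times> X"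
  using assms unfolding coarse_structure_def by (meson,meson,meson,meson,meson,meson,meson)

lemma bounded_sub_iff:
  assumes cs: "coarse_structure X \<E>" and "Y \<subseteq> X" and "A \<subseteq> Y"
  shows "bounded_in (subballean \<E> Y) A \<longleftrightarrow> bounded_in \<E> A"
proof
  assume "bounded_in (subballean \<E> Y) A"
  then show "bounded_in \<E> A" unfolding bounded_in_def subballean_def by blast
next
  assume b: "bounded_in \<E> A"
  show "bounded_in (subballean \<E> Y) A"
  proof (cases "A = {}")
    case True
    obtain E where "E \<in> \<E>" using cs_facts(1)[OF cs] by blast
    then show ?thesis using True unfolding bounded_in_def subballean_def by blast
  next
    case False
    then obtain a where a: "a \<in> A" by blast
    from b obtain x E where E: "E \<in> \<E>" "A \<subseteq> E `` {x}" unfolding bounded_in_def by blast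
    have D: "E\<inverse> O E \<in> \<E>" using cs_facts(4,5)[OF cs] E by blast
    have "A \<subseteq> ((E\<inverse> O E) \<inter> (Y \<times> Y)) `` {a}" using E a assms by blast
    then show ?thesis using D unfolding bounded_in_def subballean_def by blast
  qed
qed

lemma id_sub_comp:
  assumes "Id_on X \<subseteq> A" "Id_on X \<subseteq> B" "A \<subseteq> X \<times> X" "B \<subseteq> X \<times> X"
  shows "A \<subseteq> A O B" "B \<subseteq> A O B"
  using assms by blast+

lemma mem4: "(a,b)\<in>A \<Longrightarrow> (b,c)\<in>B \<Longrightarrow> (c,d)\<in>C \<Longrightarrow> (d,e)\<in>D \<Longrightarrow> (a,e) \<in> A O B O C O D"
  by (meson relcompI)

lemma mem3: "(a,b)\<in>A \<Longrightarrow> (b,c)\<in>B \<Longrightarrow> (c,d)\<in>C \<Longrightarrow> (a,d) \<in> A O B O C"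
  by (meson relcompI)

lemma comp_bound:
  assumes cs: "coarse_structure X \<E>" and cs': "coarse_structure Y \<E>'" and YX: "Y \<subseteq> X"
    and sub: "subballean \<E> Y \<subseteq> \<E>'"
    and E1: "E1 \<in> \<E>" and E2: "E2 \<in> \<E>" and G1: "G1 \<in> \<E>'" and G2: "G2 \<in> \<E>'"
  shows "\<exists>E\<in>\<E>. \<exists>G\<in>\<E>'. (E1 O (G1 \<union> Id_on X) O E1) O (E2 O (G2 \<union> Id_on X) O E2) \<subseteq> E O (G \<union> Id_on X) O E"
proof -
  define E where "E = E1 O E1 O E2 O E2"
  define M where "M = (E1 O E2) \<inter> (Y \<times> Y)"
  define G where "G = G1 O M O G2"
  have EE: "E \<in> \<E>" unfolding E_def using E1 E2 cs_facts(4)[OF cs] by metis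
  have "M \<in> subballean \<E> Y" unfolding M_def subballean_def using E1 E2 cs_facts(4)[OF cs] by blast
  hence M: "M \<in> \<E>'" using sub by blast
  have GG: "G \<in> \<E>'" unfolding G_def using M G1 G2 cs_facts(4)[OF cs'] by metis
  have i1: "\<And>x. x \<in> X \<Longrightarrow> (x,x) \<in> E1" "E1 \<subseteq> X \<times> X" using cs_facts(2,3)[OF cs] E1 by auto
  have i2: "\<And>x. x \<in> X \<Longrightarrow> (x,x) \<in> E2" "E2 \<subseteq> X \<times> X" using cs_facts(2,3)[OF cs] E2 by auto
  have j1: "\<And>x. x \<in> Y \<Longrightarrow> (x,x) \<in> G1" "G1 \<subseteq> Y \<times> Y" using cs_facts(2,3)[OF cs'] G1 by auto
  have j2: "\<And>x. x \<in> Y \<Longrightarrow> (x,x) \<in> G2" "G2 \<subseteq> Y \<times> Y" using cs_facts(2,3)[OF cs'] G2 by auto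
  have jm: "\<And>x. x \<in> Y \<Longrightarrow> (x,x) \<in> M" using i1 i2 YX unfolding M_def by blast
  have "(E1 O (G1 \<union> Id_on X) O E1) O (E2 O (G2 \<union> Id_on X) O E2) \<subseteq> E O (G \<union> Id_on X) O E"
  proof (rule subsetI)
    fix p assume "p \<in> (E1 O (G1 \<union> Id_on X) O E1) O (E2 O (G2 \<union> Id_on X) O E2)"
    then obtain a b c c' d e f where p: "p = (a,f)" and ab: "(a,b) \<in> E1" and bc: "(b,c) \<in> G1 \<union> Id_on X"
      and cc': "(c,c') \<in> E1" and c'd: "(c',d) \<in> E2" and de: "(d,e) \<in> G2 \<union> Id_on X" and ef: "(e,f) \<in> E2"
      by (elim relcompE) auto
    have X: "a \<in> X" "b \<in> X" "c \<in> X" "c' \<in> X" "d \<in> X" "e \<in> X" "f \<in> X"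
      using ab cc' c'd ef i1(2) i2(2) by auto
    show "p \<in> E O (G \<union> Id_on X) O E"
    proof (cases "(b,c) \<in> G1")
      case bG: True
      have Yb: "b \<in> Y" "c \<in> Y" using bG j1(2) by auto
      show ?thesis
      proof (cases "(d,e) \<in> G2")
        case True
        have Yd: "d \<in> Y" "e \<in> Y" using True j2(2) by auto
        have "(c,d) \<in> M" using Yb Yd cc' c'd unfolding M_def by blast
        hence "(b,e) \<in> G" using bG True unfolding G_def by (meson relcompI)
        moreover have "(a,b) \<in> E" unfolding E_def by (rule mem4[OF ab]) (use X i1 i2 in auto)
        moreover have "(e,f) \<in> E" unfolding E_def by (rule mem4[OF _ _ _ ef]) (use X i1 i2 in auto)
        ultimately show ?thesis using p by (meson UnI1 relcompI)
      next
        case False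
        hence "d = e" using de by auto
        have "(b,c) \<in> G" unfolding G_def by (rule mem3[OF bG]) (use Yb jm j2 in auto)
        moreover have "(a,b) \<in> E" unfolding E_def by (rule mem4[OF ab]) (use X i1 i2 in auto)
        moreover have "(c,f) \<in> E" unfolding E_def
          by (rule mem4[OF cc' _ c'd]) (use X i1 i2 ef \<open>d = e\<close> in auto)
        ultimately show ?thesis using p by (meson UnI1 relcompI)
      qed
    next
      case False
      hence "b = c" using bc by auto
      show ?thesis
      proof (cases "(d,e) \<in> G2")
        case True
        have Yd: "d \<in> Y" "e \<in> Y" using True j2(2) by auto
        have "(d,e) \<in> G" unfolding G_def by (rule mem3[OF _ _ True]) (use Yd jm j1 in auto)
        moreover have "(a,d) \<in> E" unfolding E_def
          by (rule mem4[OF ab _ _ c'd]) (use X i1 i2 cc' \<open>b = c\<close> in auto)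
        moreover have "(e,f) \<in> E" unfolding E_def by (rule mem4[OF _ _ _ ef]) (use X i1 i2 in auto)
        ultimately show ?thesis using p by (meson UnI1 relcompI)
      next
        case False
        hence "d = e" using de by auto
        have "(a,f) \<in> E" unfolding E_def
          by (rule mem4[OF ab _ c'd]) (use X i1 i2 ef cc' \<open>b = c\<close> \<open>d = e\<close> in auto)
        moreover have "(f,f) \<in> E" unfolding E_def by (rule mem4) (use X i1 i2 in auto)
        moreover have "(f,f) \<in> G \<union> Id_on X" using X by auto
        ultimately show ?thesis using p by (meson relcompI)
      qed
    qed
  qed
  then show ?thesis using EE GG by blast
qed

definition ext_cs :: "'a set \<Rightarrow> ('a \<times> 'a) set set \<Rightarrow> ('a \<times> 'a) set set \<Rightarrow> ('a \<times> 'a) set set" where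
  "ext_cs X \<E> \<E>' = {H. Id_on X \<subseteq> H \<and> H \<subseteq> X \<times> X \<and> (\<exists>E\<in>\<E>. \<exists>G\<in>\<E>'. H \<subseteq> E O (G \<union> Id_on X) O E)}"

lemma ext_contains:
  assumes cs: "coarse_structure X \<E>" and cs': "coarse_structure Y \<E>'"
  shows "\<E> \<subseteq> ext_cs X \<E> \<E>'"
proof
  fix E assume E: "E \<in> \<E>"
  obtain G0 where G0: "G0 \<in> \<E>'" using cs_facts(1)[OF cs'] by blast
  have i: "\<And>x. x \<in> X \<Longrightarrow> (x,x) \<in> E" "E \<subseteq> X \<times> X" using cs_facts(2,3)[OF cs] E by auto
  have "E \<subseteq> E O (G0 \<union> Id_on X) O E"
  proof (rule subsetI)
    fix p assume p: "p \<in> E"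
    then obtain a b where ab: "p = (a,b)" by (cases p) auto
    have bX: "b \<in> X" using p ab i(2) by auto
    show "p \<in> E O (G0 \<union> Id_on X) O E" unfolding ab
      by (rule mem3[of a b E b _ b]) (use p ab bX i(1) in auto)
  qed
  then show "E \<in> ext_cs X \<E> \<E>'" unfolding ext_cs_def using E G0 i cs_facts(2)[OF cs] by blast
qed

lemma ext_coarse:
  assumes cs: "coarse_structure X \<E>" and cs': "coarse_structure Y \<E>'" and YX: "Y \<subseteq> X"
    and sub: "subballean \<E> Y \<subseteq> \<E>'"
  shows "coarse_structure X (ext_cs X \<E> \<E>')"
proof -
  let ?F = "ext_cs X \<E> \<E>'"
  have inc: "\<E> \<subseteq> ?F" by (rule ext_contains[OF cs cs'])
  have ne: "?F \<noteq> {}" using inc cs_facts(1)[OF cs] by blast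
  have d: "\<forall>E\<in>?F. Id_on X \<subseteq> E \<and> E \<subseteq> X \<times> X" unfolding ext_cs_def by simp
  have c: "\<forall>E\<in>?F. \<forall>F\<in>?F. E O F \<in> ?F"
  proof (intro ballI)
    fix H1 H2 assume H1: "H1 \<in> ?F" and H2: "H2 \<in> ?F"
    from H1 obtain E1 G1 where E1: "E1 \<in> \<E>" "G1 \<in> \<E>'" "H1 \<subseteq> E1 O (G1 \<union> Id_on X) O E1"
      "Id_on X \<subseteq> H1" "H1 \<subseteq> X \<times> X" unfolding ext_cs_def by blast
    from H2 obtain E2 G2 where E2: "E2 \<in> \<E>" "G2 \<in> \<E>'" "H2 \<subseteq> E2 O (G2 \<union> Id_on X) O E2"
      "Id_on X \<subseteq> H2" "H2 \<subseteq> X \<times> X" unfolding ext_cs_def by blast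
    obtain E G where EG: "E \<in> \<E>" "G \<in> \<E>'"
      "(E1 O (G1 \<union> Id_on X) O E1) O (E2 O (G2 \<union> Id_on X) O E2) \<subseteq> E O (G \<union> Id_on X) O E"
      using comp_bound[OF cs cs' YX sub E1(1) E2(1) E1(2) E2(2)] by blast
    have "H1 O H2 \<subseteq> E O (G \<union> Id_on X) O E"
      using EG(3) relcomp_mono[OF E1(3) E2(3)] by (rule order_trans[rotated])
    moreover have "Id_on X \<subseteq> H1 O H2" using E1(4) E2(4) by blast
    moreover have "H1 O H2 \<subseteq> X \<times> X" using E1(5) E2(5) by blast
    ultimately show "H1 O H2 \<in> ?F" unfolding ext_cs_def using EG(1,2) by blast
  qed
  have inv: "\<forall>E\<in>?F. E\<inverse> \<in> ?F"
  proof
    fix H assume H: "H \<in> ?F"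
    from H obtain E G where EG: "E \<in> \<E>" "G \<in> \<E>'" "H \<subseteq> E O (G \<union> Id_on X) O E"
      "Id_on X \<subseteq> H" "H \<subseteq> X \<times> X" unfolding ext_cs_def by blast
    have "H\<inverse> \<subseteq> E\<inverse> O (G\<inverse> \<union> Id_on X) O E\<inverse>"
    proof (rule subsetI)
      fix p assume "p \<in> H\<inverse>"
      then obtain a f where p: "p = (a,f)" and "(f,a) \<in> H" by (cases p) auto
      then have "(f,a) \<in> E O (G \<union> Id_on X) O E" using EG(3) by blast
      then obtain b c where "(f,b) \<in> E" "(b,c) \<in> G \<union> Id_on X" "(c,a) \<in> E" by blast
      then show "p \<in> E\<inverse> O (G\<inverse> \<union> Id_on X) O E\<inverse>" unfolding p
        by (intro mem3[of a c _ b _ f]) auto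
    qed
    moreover have "E\<inverse> \<in> \<E>" "G\<inverse> \<in> \<E>'" using EG cs_facts(5)[OF cs] cs_facts(5)[OF cs'] by auto
    moreover have "Id_on X \<subseteq> H\<inverse>" "H\<inverse> \<subseteq> X \<times> X" using EG(4,5) by auto
    ultimately show "H\<inverse> \<in> ?F" unfolding ext_cs_def by blast
  qed
  have dn: "\<forall>E\<in>?F. \<forall>F. Id_on X \<subseteq> F \<and> F \<subseteq> E \<longrightarrow> F \<in> ?F"
  proof (intro ballI allI impI, elim conjE)
    fix H F assume H: "H \<in> ?F" and F1: "Id_on X \<subseteq> F" and F2: "F \<subseteq> H"
    from H obtain E G where EG: "E \<in> \<E>" "G \<in> \<E>'" "H \<subseteq> E O (G \<union> Id_on X) O E"
      "H \<subseteq> X \<times> X" unfolding ext_cs_def by blast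
    have "F \<subseteq> X \<times> X" using F2 EG(4) by (rule order_trans)
    moreover have "F \<subseteq> E O (G \<union> Id_on X) O E" using F2 EG(3) by (rule order_trans)
    ultimately show "F \<in> ?F" unfolding ext_cs_def using F1 EG(1,2) by blast
  qed
  have u: "\<Union>?F = X \<times> X"
  proof
    show "\<Union>?F \<subseteq> X \<times> X" using d by blast
    show "X \<times> X \<subseteq> \<Union>?F" using inc cs_facts(7)[OF cs] by blast
  qed
  show ?thesis unfolding coarse_structure_def by (intro conjI ne d c inv dn u)
qed

lemma bounded_back:
  assumes cs: "coarse_structure X \<E>" and cs': "coarse_structure Y \<E>'" and YX: "Y \<subseteq> X"
    and sub: "subballean \<E> Y \<subseteq> \<E>'" and nb: "\<not> bounded_in \<E> Y"
    and E: "E \<in> \<E>" and G: "G \<in> \<E>'" and H: "Y \<subseteq> (E O (G \<union> Id_on X) O E) `` {x}"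
  shows "bounded_in \<E>' Y"
proof -
  have i: "\<And>x. x \<in> X \<Longrightarrow> (x,x) \<in> E" "E \<subseteq> X \<times> X" using cs_facts(2,3)[OF cs] E by auto
  have j: "\<And>x. x \<in> Y \<Longrightarrow> (x,x) \<in> G" "G \<subseteq> Y \<times> Y" using cs_facts(2,3)[OF cs'] G by auto
  obtain b0 where b0: "b0 \<in> Y" "(x,b0) \<in> E"
  proof (rule ccontr)
    assume "\<not> thesis"
    with that have no: "\<And>b. b \<in> Y \<Longrightarrow> (x,b) \<notin> E" by blast
    have "Y \<subseteq> (E O E) `` {x}"
    proof
      fix y assume y: "y \<in> Y"
      then obtain b c where "(x,b) \<in> E" "(b,c) \<in> G \<union> Id_on X" "(c,y) \<in> E" using H by blast
      moreover have "(b,c) \<notin> G" using no j(2) \<open>(x,b) \<in> E\<close> by blast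
      ultimately show "y \<in> (E O E) `` {x}" by blast
    qed
    moreover have "E O E \<in> \<E>" using E cs_facts(4)[OF cs] by blast
    ultimately show False using nb unfolding bounded_in_def by blast
  qed
  define N where "N = (E\<inverse> O E O E) \<inter> (Y \<times> Y)"
  have "E\<inverse> O E O E \<in> \<E>" using E cs_facts(4,5)[OF cs] by metis
  hence "N \<in> subballean \<E> Y" unfolding N_def subballean_def by (rule imageI)
  hence N: "N \<in> \<E>'" using sub by blast
  have NGN: "N O G O N \<in> \<E>'" using N G cs_facts(4)[OF cs'] by metis
  have "Y \<subseteq> (N O G O N) `` {b0}"
  proof
    fix y assume y: "y \<in> Y"
    then obtain b c where xb: "(x,b) \<in> E" and bc: "(b,c) \<in> G \<union> Id_on X" and cy: "(c,y) \<in> E" using H by blast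
    have X: "x \<in> X" "b \<in> X" "c \<in> X" "y \<in> X" using xb cy i(2) by auto
    show "y \<in> (N O G O N) `` {b0}"
    proof (cases "(b,c) \<in> G")
      case True
      have Y: "b \<in> Y" "c \<in> Y" using True j(2) by auto
      have "(b0,b) \<in> E\<inverse> O E O E" by (rule mem3[of b0 x _ b _ b]) (use b0 xb i(1)[of b] X in auto)
      hence "(b0,b) \<in> N" unfolding N_def using b0 Y by blast
      moreover have "(c,y) \<in> E\<inverse> O E O E" by (rule mem3[of _ c]) (use cy i(1)[of c] X in auto)
      hence "(c,y) \<in> N" unfolding N_def using y Y by blast
      ultimately show ?thesis using True by (meson relcompI ImageI singletonI)
    next
      case False
      hence "b = c" using bc by auto
      have "(b0,y) \<in> E\<inverse> O E O E" by (rule mem3[of _ x _ b]) (use b0 xb cy \<open>b = c\<close> in auto)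
      hence "(b0,y) \<in> N" unfolding N_def using b0 y by blast
      moreover have "(y,y) \<in> E\<inverse> O E O E" by (rule mem3[of _ y]) (use i(1)[of y] X in auto)
      hence "(y,y) \<in> N" unfolding N_def using y by blast
      ultimately show ?thesis using j(1)[OF y] by (meson relcompI ImageI singletonI)
    qed
  qed
  then show ?thesis unfolding bounded_in_def using NGN by blast
qed

lemma max_part:
  fixes X Y :: "'a set" and \<E> :: "('a \<times> 'a) set set"
  assumes cs: "coarse_structure X \<E>" and YX: "Y \<subseteq> X" and nb: "\<not> bounded_in \<E> Y"
    and mx: "maximal_ballean X \<E>"
  shows "maximal_ballean Y (subballean \<E> Y)"
proof -
  have bs: "\<And>A. A \<subseteq> Y \<Longrightarrow> bounded_in (subballean \<E> Y) A \<longleftrightarrow> bounded_in \<E> A"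
    using bounded_sub_iff[OF cs YX] by blast
  have "\<not> bounded_in (subballean \<E> Y) Y" using bs[of Y] nb by blast
  moreover have "\<forall>\<E>'. coarse_structure Y \<E>' \<and> subballean \<E> Y \<subset> \<E>' \<longrightarrow> bounded_in \<E>' Y"
  proof (intro allI impI, elim conjE)
    fix \<E>' assume cs': "coarse_structure Y \<E>'" and ss: "subballean \<E> Y \<subset> \<E>'"
    have sub: "subballean \<E> Y \<subseteq> \<E>'" using ss by blast
    obtain F where F: "F \<in> \<E>'" "F \<notin> subballean \<E> Y" using ss by blast
    let ?F = "ext_cs X \<E> \<E>'"
    have csF: "coarse_structure X ?F" by (rule ext_coarse[OF cs cs' YX sub])
    have inc: "\<E> \<subseteq> ?F" by (rule ext_contains[OF cs cs'])
    have Fs: "F \<subseteq> Y \<times> Y" "Id_on Y \<subseteq> F" using cs_facts(2,3)[OF cs'] F(1) by auto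
    have "F \<union> Id_on X \<in> ?F"
    proof -
      have "F \<union> Id_on X \<subseteq> Id_on X O (F \<union> Id_on X) O Id_on X" using Fs YX by blast
      moreover have "Id_on X \<in> \<E>"
        using cs_facts(1,2,6)[OF cs] by blast
      ultimately show ?thesis unfolding ext_cs_def using F(1) Fs YX by blast
    qed
    moreover have "F \<union> Id_on X \<notin> \<E>"
    proof
      assume "F \<union> Id_on X \<in> \<E>"
      hence "(F \<union> Id_on X) \<inter> (Y \<times> Y) \<in> subballean \<E> Y" unfolding subballean_def by blast
      moreover have "(F \<union> Id_on X) \<inter> (Y \<times> Y) = F" using Fs YX by blast
      ultimately show False using F(2) by simp
    qed
    ultimately have "\<E> \<subset> ?F" using inc by blast
    hence "bounded_in ?F X" using mx csF unfolding maximal_ballean_def by blast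
    then obtain x H where H: "H \<in> ?F" "X \<subseteq> H `` {x}" unfolding bounded_in_def by blast
    then obtain E G where EG: "E \<in> \<E>" "G \<in> \<E>'" "H \<subseteq> E O (G \<union> Id_on X) O E"
      unfolding ext_cs_def by blast
    have "Y \<subseteq> (E O (G \<union> Id_on X) O E) `` {x}" using H(2) EG(3) YX by blast
    then show "bounded_in \<E>' Y" by (rule bounded_back[OF cs cs' YX sub nb EG(1,2)])
  qed
  ultimately show "maximal_ballean Y (subballean \<E> Y)" unfolding maximal_ballean_def by blast
qed

lemma en_part:
  fixes X Y :: "'a set" and \<E> :: "('a \<times> 'a) set set"
  assumes cs: "coarse_structure X \<E>" and YX: "Y \<subseteq> X" and nb: "\<not> bounded_in \<E> Y"
    and en: "extremely_normal X \<E>"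
  shows "extremely_normal Y (subballean \<E> Y)"
proof -
  have bs: "\<And>A. A \<subseteq> Y \<Longrightarrow> bounded_in (subballean \<E> Y) A \<longleftrightarrow> bounded_in \<E> A"
    using bounded_sub_iff[OF cs YX] by blast
  show "extremely_normal Y (subballean \<E> Y)" unfolding extremely_normal_def
  proof (intro allI impI, elim conjE)
    fix A assume A: "A \<subseteq> Y" "\<not> bounded_in (subballean \<E> Y) A"
    hence "\<not> bounded_in \<E> A" using bs by blast
    moreover have "A \<subseteq> X" using A(1) YX by (rule order_trans)
    ultimately have "large_in X \<E> A" using en unfolding extremely_normal_def by blast
    then obtain E where E: "E \<in> \<E>" "X = E `` A" unfolding large_in_def by blast
    have "Y \<subseteq> (E \<inter> (Y \<times> Y)) `` A"
    proof
      fix y assume y: "y \<in> Y"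
      hence "y \<in> E `` A" using E(2) YX by blast
      then obtain a where "a \<in> A" "(a,y) \<in> E" by blast
      then show "y \<in> (E \<inter> (Y \<times> Y)) `` A" using A(1) y by blast
    qed
    moreover have "(E \<inter> (Y \<times> Y)) `` A \<subseteq> Y" by blast
    ultimately have "Y = (E \<inter> (Y \<times> Y)) `` A" by (rule antisym)
    moreover have "E \<inter> (Y \<times> Y) \<in> subballean \<E> Y" unfolding subballean_def using E(1) by blast
    ultimately show "large_in Y (subballean \<E> Y) A" unfolding large_in_def by blast
  qed
qed

lemma un_part:
  fixes X Y :: "'a set" and \<E> :: "('a \<times> 'a) set set"
  assumes cs: "coarse_structure X \<E>" and YX: "Y \<subseteq> X" and nb: "\<not> bounded_in \<E> Y"
    and un: "ultranormal X \<E>"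
  shows "ultranormal Y (subballean \<E> Y)"
proof -
  have bs: "\<And>A. A \<subseteq> Y \<Longrightarrow> bounded_in (subballean \<E> Y) A \<longleftrightarrow> bounded_in \<E> A"
    using bounded_sub_iff[OF cs YX] by blast
  show "ultranormal Y (subballean \<E> Y)" unfolding ultranormal_def
  proof (intro allI impI, elim conjE)
    fix A B assume A: "A \<subseteq> Y" and B: "B \<subseteq> Y" and nA: "\<not> bounded_in (subballean \<E> Y) A"
      and nB: "\<not> bounded_in (subballean \<E> Y) B"
    have nA': "\<not> bounded_in \<E> A" using bs[OF A] nA by simp
    have nB': "\<not> bounded_in \<E> B" using bs[OF B] nB by simp
    have AX: "A \<subseteq> X" using A YX by (rule order_trans)
    have BX: "B \<subseteq> X" using B YX by (rule order_trans)
    have "\<not> asymp_disjoint \<E> A B" using un AX BX nA' nB' unfolding ultranormal_def by blast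
    then obtain E where E: "E \<in> \<E>" "\<not> bounded_in \<E> (E `` A \<inter> E `` B)"
      unfolding asymp_disjoint_def by blast
    have iE: "\<And>x. x \<in> X \<Longrightarrow> (x,x) \<in> E" "E \<subseteq> X \<times> X" using cs_facts(2,3)[OF cs] E(1) by auto
    define F where "F = E O E\<inverse>"
    have FE: "F \<in> \<E>" unfolding F_def using E(1) cs_facts(4,5)[OF cs] by metis
    define C where "C = {a\<in>A. \<exists>b\<in>B. (a,b) \<in> F}"
    have CY: "C \<subseteq> Y" unfolding C_def using A by blast
    have "E `` A \<inter> E `` B \<subseteq> E `` C"
    proof
      fix z assume "z \<in> E `` A \<inter> E `` B"
      then obtain a b where "a \<in> A" "(a,z) \<in> E" "b \<in> B" "(b,z) \<in> E" by blast
      hence "a \<in> C" unfolding C_def F_def by blast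
      then show "z \<in> E `` C" using \<open>(a,z) \<in> E\<close> by blast
    qed
    have Cnb: "\<not> bounded_in \<E> C"
    proof
      assume "bounded_in \<E> C"
      then obtain x K where K: "K \<in> \<E>" "C \<subseteq> K `` {x}" unfolding bounded_in_def by blast
      have "E `` C \<subseteq> (K O E) `` {x}" using K(2) by blast
      hence "E `` A \<inter> E `` B \<subseteq> (K O E) `` {x}"
        using \<open>E `` A \<inter> E `` B \<subseteq> E `` C\<close> by (rule order_trans[rotated])
      moreover have "K O E \<in> \<E>" using K(1) E(1) cs_facts(4)[OF cs] by metis
      ultimately show False using E(2) unfolding bounded_in_def by blast
    qed
    let ?F' = "F \<inter> (Y \<times> Y)"
    have F'm: "?F' \<in> subballean \<E> Y" unfolding subballean_def using FE by blast
    have "C \<subseteq> ?F' `` A \<inter> ?F' `` B"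
    proof
      fix a assume a: "a \<in> C"
      then obtain b where ab: "a \<in> A" "b \<in> B" "(a,b) \<in> F" unfolding C_def by blast
      have "a \<in> X" using ab A YX by blast
      hence "(a,a) \<in> F" unfolding F_def using iE(1) by blast
      moreover have "(b,a) \<in> F" using ab(3) unfolding F_def by blast
      moreover have "a \<in> Y" "b \<in> Y" using ab A B by auto
      ultimately have "(a,a) \<in> ?F'" "(b,a) \<in> ?F'" by auto
      then show "a \<in> ?F' `` A \<inter> ?F' `` B" using ab(1,2) by (meson ImageI IntI)
    qed
    moreover have "?F' `` A \<inter> ?F' `` B \<subseteq> Y" by auto
    ultimately have "\<not> bounded_in (subballean \<E> Y) (?F' `` A \<inter> ?F' `` B)"
    proof (intro notI)
      assume CS: "C \<subseteq> ?F' `` A \<inter> ?F' `` B" and SY: "?F' `` A \<inter> ?F' `` B \<subseteq> Y"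
        and bd: "bounded_in (subballean \<E> Y) (?F' `` A \<inter> ?F' `` B)"
      have "bounded_in \<E> (?F' `` A \<inter> ?F' `` B)" using bs[OF SY] bd by simp
      then obtain x K where K: "K \<in> \<E>" "?F' `` A \<inter> ?F' `` B \<subseteq> K `` {x}" unfolding bounded_in_def by blast
      have "C \<subseteq> K `` {x}" using CS K(2) by (rule order_trans)
      hence "bounded_in \<E> C" using K(1) unfolding bounded_in_def by blast
      then show False using Cnb by simp
    qed
    then show "\<not> asymp_disjoint (subballean \<E> Y) A B"
      unfolding asymp_disjoint_def using F'm by blast
  qed
qed

theorem proposition4:
  fixes X Y :: "'a set" and \<E> :: "('a \<times> 'a) set set"
  assumes "coarse_structure X \<E>"
    and "Y \<subseteq> X"
    and "\<not> bounded_in \<E> Y"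
  shows "(maximal_ballean X \<E> \<longrightarrow> maximal_ballean Y (subballean \<E> Y)) \<and>
         (extremely_normal X \<E> \<longrightarrow> extremely_normal Y (subballean \<E> Y)) \<and>
         (ultranormal X \<E> \<longrightarrow> ultranormal Y (subballean \<E> Y))"
  using max_part[OF assms] en_part[OF assms] un_part[OF assms] by blast

end
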